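(* Let $X$ be a set and let $w$ be a word on $X^{\pm1}$ with two decompositions $$w\equiv a_1w_1^{m_1}b_1\equiv a_2w_2^{m_2}b_2,$$ where $m_i\ge2$ and $w_i,a_i,b_i$ are words for $i=1,2$. Suppose that $w_1,w_2$ are primitive and that there are non-negative real constants $A,B$ such that $|a_i|\le A$, $|b_i|\le B$ and $|w|-(A+B)\ge 2|w_i|$ for $i=1,2$. Then $w_1$ and $w_2$ are cyclically conjugate words. Furthermore, regarding words as elements of the free group on $X$, $a_1w_1a_1^{-1}=a_2w_2a_2^{-1}$ and $b_1^{-1}w_1b_1=b_2^{-1}w_2b_2$.
   Context: Words are finite sequences of letters from $X^{\pm1}$; $\equiv$ is letterwise equality; $|w|$ is the number of letters of $w$. A nonempty word is primitive if it is not $u^k$ (as a word) for any word $u$ and $k\ge2$. A cyclic conjugate of a word $w\equiv u_1u_2$ is the word $u_2u_1$. *)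

theory Defs
  imports Complex_Main
begin

text \<open>Letters of X^{+-1}: a pair (x, s) with x :: 'a (the set X is the type 'a);
  s = True means x, s = False means x^{-1}. Words are lists of letters.\<close>
type_synonym 'a letter = "'a \<times> bool"
type_synonym 'a word = "'a letter list"

definition inv_letter :: "'a letter \<Rightarrow> 'a letter" where
  "inv_letter l = (fst l, \<not> snd l)"

definition inv_word :: "'a word \<Rightarrow> 'a word" where
  "inv_word w = rev (map inv_letter w)"

definition word_pow :: "'a word \<Rightarrow> nat \<Rightarrow> 'a word" where
  "word_pow u k = concat (replicate k u)"

definition primitive :: "'a word \<Rightarrow> bool" where
  "primitive w \<longleftrightarrow> w \<noteq> [] \<and> \<not> (\<exists>u k. k \<ge> 2 \<and> w = word_pow u k)"

definition cyc_conj :: "'a word \<Rightarrow> 'a word \<Rightarrow> bool" where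
  "cyc_conj v w \<longleftrightarrow> (\<exists>u1 u2. v = u1 @ u2 \<and> w = u2 @ u1)"

inductive cancel1 :: "'a word \<Rightarrow> 'a word \<Rightarrow> bool" where
  "cancel1 (p @ [l, inv_letter l] @ q) (p @ q)"

definition free_eq :: "'a word \<Rightarrow> 'a word \<Rightarrow> bool" where
  "free_eq u v \<longleftrightarrow> equivclp cancel1 u v"

end

theory Submission imports Defs begin

lemma word_pow_0[simp]: "word_pow u 0 = []" by (simp add: word_pow_def)
lemma word_pow_Suc: "word_pow u (Suc k) = u @ word_pow u k" by (simp add: word_pow_def)
lemma length_word_pow[simp]: "length (word_pow u k) = k * length u"
  by (induct k) (auto simp: word_pow_Suc)
lemma word_pow_Suc': "word_pow u (Suc k) = word_pow u k @ u"
  by (induct k) (auto simp: word_pow_Suc)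

lemma nth_word_pow: "i < k * length u \<Longrightarrow> word_pow u k ! i = u ! (i mod length u)"
proof (induct k arbitrary: i)
  case 0 then show ?case by simp
next
  case (Suc k)
  show ?case
  proof (cases "i < length u")
    case True then show ?thesis by (simp add: word_pow_Suc nth_append)
  next
    case False
    then have "i - length u < k * length u" using Suc.prems by auto
    then show ?thesis using False Suc.hyps by (simp add: word_pow_Suc nth_append le_mod_geq)
  qed
qed

lemma inv_letter_inv[simp]: "inv_letter (inv_letter l) = l" by (simp add: inv_letter_def)
lemma inv_word_inv[simp]: "inv_word (inv_word u) = u"
  by (simp add: inv_word_def rev_map comp_def)
lemma inv_word_append[simp]: "inv_word (u @ v) = inv_word v @ inv_word u"
  by (simp add: inv_word_def)
lemma inv_word_Nil[simp]: "inv_word [] = []" by (simp add: inv_word_def)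
lemma length_inv_word[simp]: "length (inv_word u) = length u" by (simp add: inv_word_def)

lemma word_pow_comm: "word_pow u k @ u = u @ word_pow u k"
  by (simp add: word_pow_Suc[symmetric] word_pow_Suc'[symmetric])

lemma inv_word_pow: "inv_word (word_pow u k) = word_pow (inv_word u) k"
  by (induct k) (auto simp: word_pow_Suc word_pow_comm)

lemma primitive_inv: "primitive u \<Longrightarrow> primitive (inv_word u)"
  unfolding primitive_def
proof (elim conjE, intro conjI notI)
  assume "u \<noteq> []" "inv_word u = []" then show False by (simp add: inv_word_def)
next
  assume n: "\<not> (\<exists>v k. 2 \<le> k \<and> u = word_pow v k)" and "\<exists>v k. 2 \<le> k \<and> inv_word u = word_pow v k"
  then obtain v k where "2 \<le> k" "inv_word u = word_pow v k" by blast
  then have "u = word_pow (inv_word v) k" by (metis inv_word_inv inv_word_pow)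
  with n \<open>2 \<le> k\<close> show False by blast
qed

lemma cancel1_ctx: "cancel1 u v \<Longrightarrow> cancel1 (x @ u @ z) (x @ v @ z)"
proof (induct rule: cancel1.induct)
  case (1 p l q)
  show ?case using cancel1.intros[of "x @ p" l "q @ z"] by simp
qed

lemma cancel1_inv: "cancel1 u v \<Longrightarrow> cancel1 (inv_word u) (inv_word v)"
proof (induct rule: cancel1.induct)
  case (1 p l q)
  show ?case using cancel1.intros[of "inv_word q" l "inv_word p"]
    by (simp add: inv_word_def)
qed

lemma free_eq_refl[simp]: "free_eq u u" by (simp add: free_eq_def)
lemma free_eq_sym: "free_eq u v \<Longrightarrow> free_eq v u" by (simp add: free_eq_def equivclp_sym)
lemma free_eq_trans [trans]: "free_eq u v \<Longrightarrow> free_eq v w \<Longrightarrow> free_eq u w"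
  unfolding free_eq_def by (rule equivclp_trans)

lemma free_eq_ctx: "free_eq u v \<Longrightarrow> free_eq (x @ u @ z) (x @ v @ z)"
  unfolding free_eq_def
proof (induct rule: equivclp_induct)
  case base then show ?case by simp
next
  case (step y z') then show ?case
    by (meson cancel1_ctx equivclp_into_equivclp)
qed

lemma free_eq_inv: "free_eq u v \<Longrightarrow> free_eq (inv_word u) (inv_word v)"
  unfolding free_eq_def
proof (induct rule: equivclp_induct)
  case base then show ?case by simp
next
  case (step y z') then show ?case
    by (meson cancel1_inv equivclp_into_equivclp)
qed

lemma free_eq_cancel: "free_eq (y @ inv_word y) []"
proof (induct y)
  case Nil then show ?case by simp
next
  case (Cons l y)
  have "free_eq ([l] @ (y @ inv_word y) @ [inv_letter l]) ([l] @ [] @ [inv_letter l])"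
    by (rule free_eq_ctx[OF Cons])
  moreover have "free_eq ([] @ [l, inv_letter l] @ []) ([] @ [])"
    unfolding free_eq_def by (rule r_into_equivclp, rule cancel1.intros)
  ultimately show ?case by (auto simp: inv_word_def intro: free_eq_trans)
qed



lemma shift_int:
  fixes f :: "int \<Rightarrow> 'b"
  assumes "\<And>i. f (i + t) = f i"
  shows "f (i + k * t) = f i"
proof -
  have nat: "f (i + int n * t) = f i" for i n
    by (induct n) (auto simp: algebra_simps assms[of "i + int _ * t", simplified algebra_simps])
  show ?thesis
  proof (cases "k \<ge> 0")
    case True then show ?thesis using nat[of i "nat k"] by simp
  next
    case False
    have "f (i + k * t + int (nat (-k)) * t) = f (i + k * t)" by (rule nat)
    then show ?thesis using False by simp
  qed
qed

lemma prim_period: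
  assumes prim: "primitive u" and p: "p = length u" and d: "0 < d" "d < p"
    and per: "\<And>j. c \<le> j \<Longrightarrow> j < c + p \<Longrightarrow> u ! ((j + d) mod p) = u ! (j mod p)"
  shows False
proof -
  define f where "f i = u ! nat (i mod int p)" for i
  have fmod: "f i = f i'" if "i mod int p = i' mod int p" for i i' using that by (simp add: f_def)
  have fd: "f (i + int d) = f i" for i
  proof -
    define j where "j = nat (int c + (i - int c) mod int p)"
    have pp: "int p > 0" using d by simp
    have m: "0 \<le> (i - int c) mod int p" "(i - int c) mod int p < int p" using pp by simp_all
    have ij: "int j = int c + (i - int c) mod int p" unfolding j_def using m by simp
    have j1: "c \<le> j" "j < c + p" using ij m by simp_all
    have jm: "int j mod int p = i mod int p" using pp
      by (simp only: ij mod_add_right_eq) simp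
    have "f (i + int d) = f (int j + int d)" by (rule fmod) (metis jm mod_add_left_eq)
    also have "\<dots> = u ! ((j + d) mod p)" unfolding f_def by (simp add: nat_mod_distrib flip: of_nat_add)
    also have "\<dots> = u ! (j mod p)" using per j1 by blast
    also have "\<dots> = f (int j)" unfolding f_def by (simp add: nat_mod_distrib)
    also have "\<dots> = f i" by (rule fmod) (rule jm)
    finally show ?thesis .
  qed
  have fp: "f (i + int p) = f i" for i by (rule fmod) simp
  define g where "g = gcd d p"
  obtain x y where xy: "x * int d + y * int p = gcd (int d) (int p)" using bezout_int by blast
  have gi: "gcd (int d) (int p) = int g" unfolding g_def by simp
  have fg: "f (i + int g) = f i" for i
  proof -
    have "f (i + int g) = f (i + x * int d + y * int p)" using xy gi by (simp add: algebra_simps)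
    also have "\<dots> = f (i + x * int d)" by (rule shift_int[where f=f, OF fp])
    also have "\<dots> = f i" by (rule shift_int[where f=f, OF fd])
    finally show ?thesis .
  qed
  have gpos: "g > 0" "g \<le> d" "g dvd p" using d unfolding g_def by (auto intro: gcd_le1_nat)
  have ffg: "f i = f (i mod int g)" for i
    using shift_int[where f=f, OF fg, of "i mod int g" "i div int g"] by (simp add: algebra_simps)
  define v where "v = take g u"
  have lv: "length v = g" using gpos d p unfolding v_def by simp
  obtain k where k: "p = g * k" using gpos by (auto elim: dvdE)
  have k2: "k \<ge> 2"
  proof (rule ccontr)
    assume "\<not> k \<ge> 2"
    then have "k = 0 \<or> k = 1" by auto
    then show False using k d gpos by auto
  qed
  have "u = word_pow v k"
  proof (rule nth_equalityI)
    show "length u = length (word_pow v k)" using lv k p by simp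
  next
    fix i assume i: "i < length u"
    have "u ! i = f (int i)" unfolding f_def using i p by (simp flip: of_nat_mod)
    also have "\<dots> = f (int (i mod g))" using ffg by (simp add: of_nat_mod)
    also have "\<dots> = u ! (i mod g)"
    proof -
      have "i mod g < p" using gpos d by (meson mod_less_divisor order.strict_trans order_le_less_trans)
      then show ?thesis unfolding f_def by (simp flip: of_nat_mod)
    qed
    also have "\<dots> = v ! (i mod g)" unfolding v_def using gpos by simp
    also have "\<dots> = word_pow v k ! i" using i k p lv by (simp add: nth_word_pow mult.commute)
    finally show "u ! i = word_pow v k ! i" .
  qed
  with prim k2 show False unfolding primitive_def by blast
qed


lemma word_pow_add: "word_pow u (a + b) = word_pow u a @ word_pow u b"
  by (simp add: word_pow_def replicate_add)

lemma nth_region: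
  assumes "w = a @ word_pow u m @ b" "length a \<le> k" "k < length a + m * length u"
  shows "w ! k = u ! ((k - length a) mod length u)"
proof -
  have "k - length a < m * length u" using assms by linarith
  then have "w ! k = word_pow u m ! (k - length a)" using assms by (simp add: nth_append)
  also have "\<dots> = u ! ((k - length a) mod length u)" using assms by (intro nth_word_pow) auto
  finally show ?thesis .
qed

lemma no_smaller:
  assumes e1: "w = a1 @ word_pow w1 m1 @ b1" and e2: "w = a2 @ word_pow w2 m2 @ b2"
    and prim: "primitive w2" and p1: "0 < length w1" and lt: "length w1 < length w2"
    and lo: "length a1 \<le> lo" "length a2 \<le> lo"
    and h1: "lo + 2 * length w2 \<le> length a1 + m1 * length w1"
    and h2: "lo + 2 * length w2 \<le> length a2 + m2 * length w2"
  shows False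
proof (rule prim_period[OF prim refl p1 lt])
  fix j assume j: "lo - length a2 \<le> j" "j < lo - length a2 + length w2"
  define k where "k = length a2 + j"
  have k: "lo \<le> k" "k < lo + length w2" using j lo unfolding k_def by auto
  have "w ! k = w2 ! ((k - length a2) mod length w2)"
    by (rule nth_region[OF e2]) (use k h2 k_def in auto)
  then have A: "w ! k = w2 ! (j mod length w2)" by (simp add: k_def)
  have "w ! (k + length w1) = w2 ! ((k + length w1 - length a2) mod length w2)"
    by (rule nth_region[OF e2]) (use k h2 k_def lt in auto)
  then have B: "w ! (k + length w1) = w2 ! ((j + length w1) mod length w2)" by (simp add: k_def)
  have "w ! k = w1 ! ((k - length a1) mod length w1)"
    by (rule nth_region[OF e1]) (use k h1 lo lt in auto)
  moreover have "w ! (k + length w1) = w1 ! ((k + length w1 - length a1) mod length w1)"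
    by (rule nth_region[OF e1]) (use k h1 lo lt in auto)
  moreover have "(k + length w1 - length a1) mod length w1 = (k - length a1) mod length w1"
  proof -
    have "k + length w1 - length a1 = (k - length a1) + length w1" using k lo by simp
    then show ?thesis by simp
  qed
  ultimately have "w ! k = w ! (k + length w1)" by simp
  with A B show "w2 ! ((j + length w1) mod length w2) = w2 ! (j mod length w2)" by simp
qed

lemma aligned:
  assumes e1: "w = a1 @ word_pow w1 m1 @ b1" and e2: "w = a2 @ word_pow w2 m2 @ b2"
    and pe: "length w1 = length w2" and p: "0 < length w1"
    and s: "length a1 \<le> length a2"
    and h1: "length a2 + length w1 \<le> length a1 + m1 * length w1" and m2: "1 \<le> m2"
  shows "w2 = rotate (length a2 - length a1) w1
    \<and> free_eq (a1 @ w1 @ inv_word a1) (a2 @ w2 @ inv_word a2)"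
proof -
  define p where "p = length w1"
  define d where "d = length a2 - length a1"
  define q where "q = d div p"
  define r where "r = d mod p"
  have dqr: "d = q * p + r" unfolding q_def r_def by simp
  have rp: "r < p" unfolding r_def p_def using p by simp
  have rot: "w2 = rotate d w1"
  proof (rule nth_equalityI)
    show "length w2 = length (rotate d w1)" using pe by simp
  next
    fix j assume j: "j < length w2"
    have "w ! (length a2 + j) = w2 ! ((length a2 + j - length a2) mod length w2)"
      by (rule nth_region[OF e2]) (use j m2 in \<open>auto intro: order.strict_trans2\<close>)
    then have A: "w ! (length a2 + j) = w2 ! j" using j by simp
    have "w ! (length a2 + j) = w1 ! ((length a2 + j - length a1) mod length w1)"
      by (rule nth_region[OF e1]) (use j s h1 pe in auto)
    moreover have "rotate d w1 ! j = w1 ! ((d + j) mod length w1)"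
      using j pe by (simp add: nth_rotate)
    moreover have "length a2 + j - length a1 = d + j" using s unfolding d_def by simp
    ultimately show "w2 ! j = rotate d w1 ! j" using A by simp
  qed
  define y where "y = take r w1"
  define z where "z = drop r w1"
  define P where "P = word_pow w1 q"
  have w1yz: "w1 = y @ z" unfolding y_def z_def by simp
  have w2zy: "w2 = z @ y" unfolding y_def z_def r_def p_def using rot by (simp add: rotate_drop_take)
  have qm: "q + 1 \<le> m1"
  proof -
    have "q * p + p \<le> m1 * p" using h1 s dqr unfolding d_def p_def by linarith
    then have "(q + 1) * p \<le> m1 * p" by simp
    then show ?thesis using p unfolding p_def by (meson mult_le_cancel2)
  qed
  have a2: "a2 = a1 @ P @ y"
  proof -
    have "a2 = take (length a2) w" using e2 by simp
    also have "\<dots> = a1 @ take d (word_pow w1 m1 @ b1)" using e1 s unfolding d_def by simp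
    also have "word_pow w1 m1 = word_pow w1 q @ w1 @ word_pow w1 (m1 - q - 1)"
      using word_pow_add[of w1 q "m1 - q"] qm word_pow_Suc[of w1 "m1 - q - 1"]
      by (simp add: Suc_diff_Suc)
    finally show ?thesis using rp unfolding P_def y_def dqr p_def by simp
  qed
  have "a2 @ w2 @ inv_word a2 = (a1 @ P @ y @ z) @ (y @ inv_word y) @ (inv_word P @ inv_word a1)"
    using a2 w2zy by simp
  also have "free_eq \<dots> ((a1 @ P @ y @ z) @ [] @ (inv_word P @ inv_word a1))"
    by (rule free_eq_ctx[OF free_eq_cancel])
  also have "(a1 @ P @ y @ z) @ [] @ (inv_word P @ inv_word a1) = (a1 @ w1) @ (P @ inv_word P) @ inv_word a1"
    using word_pow_comm[of w1 q] w1yz unfolding P_def by simp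
  also have "free_eq \<dots> ((a1 @ w1) @ [] @ inv_word a1)"
    by (rule free_eq_ctx[OF free_eq_cancel])
  finally have "free_eq (a2 @ w2 @ inv_word a2) (a1 @ w1 @ inv_word a1)" by simp
  then show ?thesis using rot free_eq_sym unfolding d_def by blast
qed


lemma core:
  fixes A B :: nat
  assumes e1: "w = a1 @ word_pow w1 m1 @ b1" and e2: "w = a2 @ word_pow w2 m2 @ b2"
    and m: "m1 \<ge> 2" "m2 \<ge> 2" and pr: "primitive w1" "primitive w2"
    and la: "length a1 \<le> A" "length a2 \<le> A" and lb: "length b1 \<le> B" "length b2 \<le> B"
    and l1: "A + B + 2 * length w1 \<le> length w" and l2: "A + B + 2 * length w2 \<le> length w"
  shows "cyc_conj w1 w2 \<and> free_eq (a1 @ w1 @ inv_word a1) (a2 @ w2 @ inv_word a2)"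
proof -
  have p1: "0 < length w1" and p2: "0 < length w2" using pr unfolding primitive_def by auto
  have L1: "length w = length a1 + m1 * length w1 + length b1" using e1 by simp
  have L2: "length w = length a2 + m2 * length w2 + length b2" using e2 by simp
  define lo where "lo = max (length a1) (length a2)"
  have lo: "length a1 \<le> lo" "length a2 \<le> lo" "lo \<le> A" using la unfolding lo_def by auto
  have eq: "length w1 = length w2"
  proof (rule ccontr)
    assume "length w1 \<noteq> length w2"
    then consider "length w1 < length w2" | "length w2 < length w1" by linarith
    then show False
    proof cases
      case 1
      show False by (rule no_smaller[OF e1 e2 pr(2) p1 1 lo(1,2)]) (use L1 L2 lo lb l1 l2 in linarith)+
    next
      case 2
      show False by (rule no_smaller[OF e2 e1 pr(1) p2 2 lo(2,1)]) (use L1 L2 lo lb l1 l2 in linarith)+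
    qed
  qed
  show ?thesis
  proof (cases "length a1 \<le> length a2")
    case True
    have "w2 = rotate (length a2 - length a1) w1
      \<and> free_eq (a1 @ w1 @ inv_word a1) (a2 @ w2 @ inv_word a2)"
      by (rule aligned[OF e1 e2 eq p1 True]) (use L1 L2 lo lb l1 l2 m in linarith)+
    then show ?thesis unfolding cyc_conj_def
      by (metis append_take_drop_id rotate_drop_take)
  next
    case False
    have "w1 = rotate (length a1 - length a2) w2
      \<and> free_eq (a2 @ w2 @ inv_word a2) (a1 @ w1 @ inv_word a1)"
      by (rule aligned[OF e2 e1 eq[symmetric] p2]) (use False L1 L2 lo lb l1 l2 m eq in linarith)+
    then show ?thesis unfolding cyc_conj_def
      by (metis append_take_drop_id rotate_drop_take free_eq_sym)
  qed
qed

theorem proposition3p3: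
  fixes w a1 w1 b1 a2 w2 b2 :: "'a word" and m1 m2 :: nat and A B :: real
  assumes "w = a1 @ word_pow w1 m1 @ b1"
    and "w = a2 @ word_pow w2 m2 @ b2"
    and "m1 \<ge> 2" and "m2 \<ge> 2"
    and "primitive w1" and "primitive w2"
    and "A \<ge> 0" and "B \<ge> 0"
    and "real (length a1) \<le> A" and "real (length a2) \<le> A"
    and "real (length b1) \<le> B" and "real (length b2) \<le> B"
    and "real (length w) - (A + B) \<ge> 2 * real (length w1)"
    and "real (length w) - (A + B) \<ge> 2 * real (length w2)"
  shows "cyc_conj w1 w2
    \<and> free_eq (a1 @ w1 @ inv_word a1) (a2 @ w2 @ inv_word a2)
    \<and> free_eq (inv_word b1 @ w1 @ b1) (inv_word b2 @ w2 @ b2)"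
proof -
  define A' where "A' = max (length a1) (length a2)"
  define B' where "B' = max (length b1) (length b2)"
  have rA: "real A' \<le> A" and rB: "real B' \<le> B" unfolding A'_def B'_def using assms(9-12) by auto
  have l1: "A' + B' + 2 * length w1 \<le> length w" using rA rB assms(13)
    by (simp add: of_nat_le_iff[symmetric] del: of_nat_le_iff)
  have l2: "A' + B' + 2 * length w2 \<le> length w" using rA rB assms(14)
    by (simp add: of_nat_le_iff[symmetric] del: of_nat_le_iff)
  have r1: "cyc_conj w1 w2 \<and> free_eq (a1 @ w1 @ inv_word a1) (a2 @ w2 @ inv_word a2)"
    by (rule core[OF assms(1-6), of A' B']) (use l1 l2 in \<open>auto simp: A'_def B'_def\<close>)
  have e1: "inv_word w = inv_word b1 @ word_pow (inv_word w1) m1 @ inv_word a1"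
    using assms(1) by (simp add: inv_word_pow)
  have e2: "inv_word w = inv_word b2 @ word_pow (inv_word w2) m2 @ inv_word a2"
    using assms(2) by (simp add: inv_word_pow)
  have "cyc_conj (inv_word w1) (inv_word w2) \<and>
     free_eq (inv_word b1 @ inv_word w1 @ inv_word (inv_word b1)) (inv_word b2 @ inv_word w2 @ inv_word (inv_word b2))"
    by (rule core[OF e1 e2 assms(3,4) primitive_inv[OF assms(5)] primitive_inv[OF assms(6)], of B' A'])
      (use l1 l2 in \<open>auto simp: A'_def B'_def\<close>)
  then have "free_eq (inv_word b1 @ inv_word w1 @ b1) (inv_word b2 @ inv_word w2 @ b2)" by simp
  then have "free_eq (inv_word (inv_word b1 @ inv_word w1 @ b1)) (inv_word (inv_word b2 @ inv_word w2 @ b2))"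
    by (rule free_eq_inv)
  then have "free_eq (inv_word b1 @ w1 @ b1) (inv_word b2 @ w2 @ b2)" by simp
  with r1 show ?thesis by blast
qed

end
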